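(* Let $1\le\gamma\le2$. Let $\tilde\Phi:\mathbb{R}^N\to\mathbb{R}$ with $\nabla\tilde\Phi\in\Delta_N$, and suppose the full-information GBPA with potential $\tilde\Phi$ is DiffStable($D_{\infty,\gamma}$, $\|\cdot\|_\infty$) at level $\epsilon$, i.e. $D_{\infty,\gamma}(\nabla\tilde\Phi(\sum_{s<t}\ell'_s),\nabla\tilde\Phi(\sum_{s\le t}\ell'_s))\le\epsilon\|\ell'_t\|_\infty$ for all $t$ and all nonnegative loss vectors $\ell'_1,\dots,\ell'_t\in[0,\infty)^N$. In the $N$-armed bandit GBPA with losses $\ell_t\in[0,1]^N$, where $p_t=\nabla\tilde\Phi(\hat L_{t-1})$, $i_t\sim p_t$, $\hat\ell_t=\frac{\ell_{t,i_t}}{p_{t,i_t}}\mathbf{e}_{i_t}$, $\hat L_t=\hat L_{t-1}+\hat\ell_t$ (with $\hat L_0=0$) and $p_{t+1}=\nabla\tilde\Phi(\hat L_t)$, we have for every $t$ \[\langle p_t-p_{t+1},\hat\ell_t\rangle\le\epsilon\,\hat\ell_{t,i_t}^2\,p_{t,i_t}^\gamma.\]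
   Context: $\Delta_N$ is the probability simplex. The Tsallis $\gamma$-logarithm is $\log_\gamma(x)=\log x$ if $\gamma=1$ and $\frac{x^{1-\gamma}-1}{1-\gamma}$ otherwise; for distributions $P,Q$ on $[N]$, $D_{\infty,\gamma}(P,Q)=\sup_{B\subseteq[N]}\log_\gamma P(B)-\log_\gamma Q(B)$. *)

theory Defs
  imports "HOL-Analysis.Analysis"
begin

definition prob_simplex :: "(real^'n::finite) set" where
  "prob_simplex = {p. (\<forall>i. 0 \<le> p $ i) \<and> (\<Sum>i\<in>UNIV. p $ i) = 1}"

definition tsallis_log :: "real \<Rightarrow> real \<Rightarrow> real" where
  "tsallis_log \<gamma> x = (if \<gamma> = 1 then ln x else (x powr (1 - \<gamma>) - 1) / (1 - \<gamma>))"

definition set_prob :: "real^'n::finite \<Rightarrow> 'n set \<Rightarrow> real" where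
  "set_prob P B = (\<Sum>i\<in>B. P $ i)"

text \<open>D_{infinity,gamma}(P,Q) = sup over B of log_gamma P(B) - log_gamma Q(B), extended-real valued.
  Sets with P(B) = 0 contribute -infinity and are omitted; P(B) > 0 = Q(B) contributes +infinity.\<close>
definition D_inf_gamma :: "real \<Rightarrow> real^'n::finite \<Rightarrow> real^'n \<Rightarrow> ereal" where
  "D_inf_gamma \<gamma> P Q =
     (SUP B\<in>{B. 0 < set_prob P B}.
        if set_prob Q B = 0 then \<infinity>
        else ereal (tsallis_log \<gamma> (set_prob P B) - tsallis_log \<gamma> (set_prob Q B)))"

text \<open>Bandit GBPA: g is the gradient of the potential, l t the loss vector at round t (t \<ge> 1),
  I t the arm drawn at round t. bandit_Lhat t is the cumulative loss estimate after round t.\<close>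
fun bandit_Lhat :: "(real^'n::finite \<Rightarrow> real^'n) \<Rightarrow> (nat \<Rightarrow> real^'n) \<Rightarrow> (nat \<Rightarrow> 'n) \<Rightarrow> nat \<Rightarrow> real^'n" where
  "bandit_Lhat g l I 0 = 0"
| "bandit_Lhat g l I (Suc t) = bandit_Lhat g l I t +
     ((l (Suc t) $ I (Suc t)) / (g (bandit_Lhat g l I t) $ I (Suc t))) *\<^sub>R axis (I (Suc t)) 1"

definition bandit_p :: "(real^'n::finite \<Rightarrow> real^'n) \<Rightarrow> (nat \<Rightarrow> real^'n) \<Rightarrow> (nat \<Rightarrow> 'n) \<Rightarrow> nat \<Rightarrow> real^'n" where
  "bandit_p g l I t = g (bandit_Lhat g l I (t - 1))"

definition bandit_lhat :: "(real^'n::finite \<Rightarrow> real^'n) \<Rightarrow> (nat \<Rightarrow> real^'n) \<Rightarrow> (nat \<Rightarrow> 'n) \<Rightarrow> nat \<Rightarrow> real^'n" where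
  "bandit_lhat g l I t = ((l t $ I t) / (bandit_p g l I t $ I t)) *\<^sub>R axis (I t) 1"

end

theory Submission
  imports Defs
begin

lemma tangent_ineq:
  fixes p q \<gamma> :: real
  assumes p: "0 < p" and q: "0 < q" and g: "1 \<le> \<gamma>"
  shows "p - q \<le> p powr \<gamma> * (tsallis_log \<gamma> p - tsallis_log \<gamma> q)"
proof (cases "\<gamma> = 1")
  case True
  have "ln (q/p) \<le> q/p - 1" using p q by (intro ln_le_minus_one) simp
  hence "ln q - ln p \<le> q/p - 1" using p q by (simp add: ln_div)
  hence "p * (ln q - ln p) \<le> p * (q/p - 1)" using p by (intro mult_left_mono) auto
  also have "p * (q/p - 1) = q - p" using p by (simp add: field_simps)
  finally have "p * (ln q - ln p) \<le> q - p" .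
  thus ?thesis using True p by (simp add: tsallis_log_def algebra_simps)
next
  case False
  define a where "a = 1 - \<gamma>"
  have a: "a < 0" using False g a_def by auto
  define r where "r = q / p"
  have r: "0 < r" using p q r_def by simp
  have qr: "q = p * r" using p r_def by simp
  have "1 + a * ln r \<le> exp (a * ln r)" by simp
  also have "exp (a * ln r) = r powr a" using r by (simp add: powr_def)
  finally have h1: "1 + a * ln r \<le> r powr a" .
  have "ln r \<le> r - 1" using r by (rule ln_le_minus_one)
  hence "a * (r - 1) \<le> a * ln r" using a by (intro mult_left_mono_neg) auto
  with h1 have h2: "1 + a * (r - 1) \<le> r powr a" by linarith
  have pg: "p powr \<gamma> * p powr a = p" using p by (simp add: a_def flip: powr_add)
  have "p powr \<gamma> * q powr a = p * r powr a"
    using p r pg by (simp add: qr powr_mult)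
  also have "\<dots> \<ge> p * (1 + a * (r - 1))" using p h2 by (intro mult_left_mono) auto
  moreover have "p * (1 + a * (r - 1)) = p + a * (q - p)" using p by (simp add: r_def field_simps)
  ultimately have h3: "p + a * (q - p) \<le> p powr \<gamma> * q powr a" by simp
  have "p - p powr \<gamma> * q powr a \<le> a * (p - q)" using h3 by (simp add: algebra_simps)
  hence "(p - p powr \<gamma> * q powr a) / a \<ge> p - q" using a
    by (simp add: divide_simps mult.commute)
  moreover have "p powr \<gamma> * (tsallis_log \<gamma> p - tsallis_log \<gamma> q) = (p - p powr \<gamma> * q powr a) / a"
    using False a pg by (simp add: tsallis_log_def a_def[symmetric] field_simps)
  ultimately show ?thesis by simp
qed

lemma Lhat_sum: "bandit_Lhat g l I t = (\<Sum>s\<in>{1..t}. bandit_lhat g l I s)"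
proof (induction t)
  case 0
  then show ?case by simp
next
  case (Suc t)
  then show ?case by (simp add: sum.cl_ivl_Suc bandit_lhat_def bandit_p_def)
qed

theorem lemma7:
  fixes \<Phi> :: "real^'n::finite \<Rightarrow> real" and g :: "real^'n \<Rightarrow> real^'n"
    and \<gamma> \<epsilon> :: real and l :: "nat \<Rightarrow> real^'n" and I :: "nat \<Rightarrow> 'n" and t :: nat
  assumes "1 \<le> \<gamma>" and "\<gamma> \<le> 2"
    and grad: "\<forall>x. (\<Phi> has_derivative (\<lambda>h. g x \<bullet> h)) (at x)"
    and simplex: "\<forall>x. g x \<in> prob_simplex"
    and stable: "\<forall>t\<ge>1. \<forall>l' :: nat \<Rightarrow> real^'n. (\<forall>s\<in>{1..t}. \<forall>i. 0 \<le> l' s $ i) \<longrightarrow>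
        D_inf_gamma \<gamma> (g (\<Sum>s\<in>{1..<t}. l' s)) (g (\<Sum>s\<in>{1..t}. l' s)) \<le> ereal (\<epsilon> * infnorm (l' t))"
    and losses: "\<forall>s\<in>{1..t}. \<forall>i. 0 \<le> l s $ i \<and> l s $ i \<le> 1"
    and arms: "\<forall>s\<in>{1..t}. 0 < bandit_p g l I s $ I s"
    and "1 \<le> t"
  shows "(bandit_p g l I t - bandit_p g l I (t + 1)) \<bullet> bandit_lhat g l I t
           \<le> \<epsilon> * (bandit_lhat g l I t $ I t)^2 * (bandit_p g l I t $ I t) powr \<gamma>"
proof -
  define i where "i = I t"
  define P where "P = bandit_p g l I t"
  define Q where "Q = bandit_p g l I (t + 1)"
  define c where "c = l t $ i / P $ i"
  have Pi: "0 < P $ i" using arms assms(8) by (auto simp: P_def i_def)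
  have c0: "0 \<le> c" using losses assms(8) Pi by (auto simp: c_def)
  have lh: "bandit_lhat g l I t = c *\<^sub>R axis i 1" by (simp add: bandit_lhat_def c_def i_def P_def)
  have inr: "(P - Q) \<bullet> bandit_lhat g l I t = c * (P $ i - Q $ i)"
    by (simp add: lh inner_axis)
  have lhi: "bandit_lhat g l I t $ i = c" by (simp add: lh)
  show ?thesis
  proof (cases "c = 0")
    case True
    then show ?thesis using inr lhi by (simp add: P_def Q_def i_def)
  next
    case False
    hence cpos: "0 < c" using c0 by simp
    have nn: "\<forall>s\<in>{1..t}. \<forall>j. 0 \<le> bandit_lhat g l I s $ j"
    proof (intro ballI allI)
      fix s j assume s: "s \<in> {1..t}"
      have "0 \<le> l s $ I s" "0 < bandit_p g l I s $ I s" using losses arms s by auto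
      thus "0 \<le> bandit_lhat g l I s $ j"
        by (simp add: bandit_lhat_def axis_def)
    qed
    have PP: "P = g (\<Sum>s\<in>{1..<t}. bandit_lhat g l I s)"
    proof -
      have "{1..<t} = {1..t-1}" using assms(8) by auto
      thus ?thesis by (simp add: P_def bandit_p_def Lhat_sum)
    qed
    have QQ: "Q = g (\<Sum>s\<in>{1..t}. bandit_lhat g l I s)"
      by (simp add: Q_def bandit_p_def Lhat_sum)
    have infn: "infnorm (bandit_lhat g l I t) = c"
    proof -
      have "infnorm (axis i (1::real) :: real^'n) = 1"
      proof (rule antisym)
        show "infnorm (axis i (1::real) :: real^'n) \<le> 1"
          using infnorm_le_norm[of "axis i (1::real) :: real^'n"] by simp
        show "1 \<le> infnorm (axis i (1::real) :: real^'n)"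
          using component_le_infnorm_cart[of "axis i (1::real) :: real^'n" i] by simp
      qed
      thus ?thesis using c0 by (simp add: lh infnorm_mul)
    qed
    have D: "D_inf_gamma \<gamma> P Q \<le> ereal (\<epsilon> * c)"
      using stable assms(8) nn by (simp add: PP QQ flip: infn)
    have sp: "set_prob P {i} = P $ i" "set_prob Q {i} = Q $ i" by (simp_all add: set_prob_def)
    have "(if set_prob Q {i} = 0 then \<infinity>
        else ereal (tsallis_log \<gamma> (set_prob P {i}) - tsallis_log \<gamma> (set_prob Q {i}))) \<le> D_inf_gamma \<gamma> P Q"
      unfolding D_inf_gamma_def by (rule SUP_upper) (use Pi sp in simp)
    hence "(if set_prob Q {i} = 0 then \<infinity>
        else ereal (tsallis_log \<gamma> (set_prob P {i}) - tsallis_log \<gamma> (set_prob Q {i}))) \<le> ereal (\<epsilon> * c)"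
      using D by (rule order_trans)
    hence E: "(if Q $ i = 0 then \<infinity>
        else ereal (tsallis_log \<gamma> (P $ i) - tsallis_log \<gamma> (Q $ i))) \<le> ereal (\<epsilon> * c)"
      unfolding sp .
    have Qnn: "0 \<le> Q $ i" using simplex by (simp add: Q_def bandit_p_def prob_simplex_def)
    have Qi0: "Q $ i \<noteq> 0" using E by (cases "Q $ i = 0") auto
    hence Qi: "0 < Q $ i" using Qnn by simp
    have T: "tsallis_log \<gamma> (P $ i) - tsallis_log \<gamma> (Q $ i) \<le> \<epsilon> * c" using E Qi0 by simp
    have "P $ i - Q $ i \<le> P $ i powr \<gamma> * (tsallis_log \<gamma> (P $ i) - tsallis_log \<gamma> (Q $ i))"
      using tangent_ineq Pi Qi assms(1) by blast
    also have "\<dots> \<le> P $ i powr \<gamma> * (\<epsilon> * c)" using T by (intro mult_left_mono) auto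
    finally have "c * (P $ i - Q $ i) \<le> c * (P $ i powr \<gamma> * (\<epsilon> * c))"
      using cpos by (intro mult_left_mono) auto
    thus ?thesis using inr lhi by (simp add: P_def Q_def i_def power2_eq_square algebra_simps)
  qed
qed

end
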